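(* Let $K$ be a field, let $n,d\ge 2$ be integers with $d\neq 3$, let $V(n,d)=\{\mathbf b\in\mathbb N^n:\sum_i b_i=d\}$, let $\mathbf a=(0,\dots,0,1,d-1)\in V(n,d)$ and $\Gamma=V(n,d)\setminus\{\mathbf a\}$. Then $K[\Gamma]$ is quadratic, i.e. the kernel $I(\Gamma)$ of the $K$-algebra surjection $S=K[x_\alpha:\alpha\in\Gamma]\to K[\Gamma]$, $x_\alpha\mapsto t^\alpha$, is generated by homogeneous polynomials of degree $2$.
   Context: $K[\Gamma]$ denotes the $K$-subalgebra of $K[t_1,\dots,t_n]$ generated by the monomials $t^\alpha=t_1^{\alpha_1}\cdots t_n^{\alpha_n}$, $\alpha\in\Gamma$; $S$ is a polynomial ring with one variable $x_\alpha$ of degree $1$ for each $\alpha\in\Gamma$. *)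

theory Defs
  imports Main "HOL-Library.Poly_Mapping"
begin

(* Exponent vectors in N^n are finitely supported maps nat =>0 nat with support in
  {0..<n} (coordinate i of the paper is index i-1 here).
  A monomial in the variables x_alpha is a map (nat =>0 nat) =>0 nat
  (alpha \<mapsto> exponent of x_alpha); a polynomial is a finitely supported map from monomials
  to coefficients. Polynomials in t_1..t_n are maps (nat =>0 nat) =>0 'k.*)

type_synonym expvec = "nat \<Rightarrow>\<^sub>0 nat"
type_synonym 'k spoly = "((nat \<Rightarrow>\<^sub>0 nat) \<Rightarrow>\<^sub>0 nat) \<Rightarrow>\<^sub>0 'k"
type_synonym 'k tpoly = "(nat \<Rightarrow>\<^sub>0 nat) \<Rightarrow>\<^sub>0 'k"

definition Vnd :: "nat \<Rightarrow> nat \<Rightarrow> expvec set" where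
  "Vnd n d = {b. Poly_Mapping.keys b \<subseteq> {..<n} \<and> (\<Sum>i<n. Poly_Mapping.lookup b i) = d}"

definition avec :: "nat \<Rightarrow> nat \<Rightarrow> expvec" where
  "avec n d = Poly_Mapping.single (n - 2) 1 + Poly_Mapping.single (n - 1) (d - 1)"

definition Sring :: "expvec set \<Rightarrow> 'k::field spoly set" where
  "Sring \<Gamma> = {f. \<forall>m\<in>Poly_Mapping.keys f. Poly_Mapping.keys m \<subseteq> \<Gamma>}"

(* The K-algebra map x_alpha \<mapsto> t^alpha, extended multiplicatively and linearly.*)
definition toric_map :: "'k::field spoly \<Rightarrow> 'k tpoly" where
  "toric_map f = (\<Sum>m\<in>Poly_Mapping.keys f. Poly_Mapping.single 0 (Poly_Mapping.lookup f m) *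
       (\<Prod>\<alpha>\<in>Poly_Mapping.keys m. (Poly_Mapping.single \<alpha> 1) ^ Poly_Mapping.lookup m \<alpha>))"

definition toric_ideal :: "expvec set \<Rightarrow> 'k::field spoly set" where
  "toric_ideal \<Gamma> = {f \<in> Sring \<Gamma>. toric_map f = 0}"

definition homogeneous_deg :: "nat \<Rightarrow> 'k::field spoly \<Rightarrow> bool" where
  "homogeneous_deg k f \<longleftrightarrow> (\<forall>m\<in>Poly_Mapping.keys f. (\<Sum>\<alpha>\<in>Poly_Mapping.keys m. Poly_Mapping.lookup m \<alpha>) = k)"

definition ideal_in :: "'k::field spoly set \<Rightarrow> 'k spoly set \<Rightarrow> 'k spoly set" where
  "ideal_in R G = {f. \<exists>F c. finite F \<and> F \<subseteq> G \<and> (\<forall>g\<in>F. c g \<in> R) \<and> f = (\<Sum>g\<in>F. c g * g)}"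

end

theory Submission
  imports Defs "HOL-Library.Multiset"
begin

lemma lookup_single': "Poly_Mapping.lookup (Poly_Mapping.single k v) l = (if k = l then v else 0)"
  by (simp add: lookup_single when_def)

definition ms :: "('a \<Rightarrow>\<^sub>0 nat) \<Rightarrow> 'a multiset" where
  "ms m = Abs_multiset (Poly_Mapping.lookup m)"

lemma count_ms[simp]: "count (ms m) x = Poly_Mapping.lookup m x"
proof -
  have "finite {x. Poly_Mapping.lookup m x > 0}"
    using finite_keys[of m] by (simp add: in_keys_iff[symmetric] Collect_mem_eq)
  then show ?thesis unfolding ms_def by (simp add: count_Abs_multiset)
qed

definition mp :: "'a multiset \<Rightarrow> ('a \<Rightarrow>\<^sub>0 nat)" where
  "mp A = Abs_poly_mapping (count A)"

lemma lookup_mp[simp]: "Poly_Mapping.lookup (mp A) x = count A x"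
proof -
  have "finite {x. count A x \<noteq> 0}" by simp
  then show ?thesis unfolding mp_def by simp
qed

lemma mp_ms[simp]: "mp (ms m) = m"
  by (rule poly_mapping_eqI) simp

lemma ms_mp[simp]: "ms (mp A) = A"
  by (rule multiset_eqI) simp

lemma keys_mp[simp]: "Poly_Mapping.keys (mp A) = set_mset A"
  by (auto simp: in_keys_iff)

lemma mp_add: "mp (A + B) = mp A + mp B"
  by (rule poly_mapping_eqI) (simp add: lookup_add)

lemma ms_add: "ms (a + b) = ms a + ms b"
  by (rule multiset_eqI) (simp add: lookup_add)

lemma mp_single: "mp {#x#} = Poly_Mapping.single x 1"
  by (rule poly_mapping_eqI) (simp add: lookup_single')

lemma mp_empty[simp]: "mp {#} = 0"
  by (rule poly_mapping_eqI) simp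

definition W :: "((nat \<Rightarrow>\<^sub>0 nat) \<Rightarrow>\<^sub>0 nat) \<Rightarrow> (nat \<Rightarrow>\<^sub>0 nat)" where
  "W m = sum_mset (ms m)"

lemma W_add: "W (a + b) = W a + W b"
  by (simp add: W_def ms_add)

lemma W_mp[simp]: "W (mp A) = sum_mset A"
  by (simp add: W_def)

lemma prod_pow_single:
  assumes "finite S" "set_mset A \<subseteq> S"
  shows "(\<Prod>\<alpha>\<in>S. (Poly_Mapping.single \<alpha> (1::'k::field)) ^ count A \<alpha>) = Poly_Mapping.single (sum_mset A) 1"
  using assms(2)
proof (induction A)
  case empty
  then show ?case by simp
next
  case (add x A)
  have xS: "x \<in> S" using add.prems by simp
  have "(\<Prod>\<alpha>\<in>S. (Poly_Mapping.single \<alpha> (1::'k)) ^ count (add_mset x A) \<alpha>)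
      = (\<Prod>\<alpha>\<in>S. (Poly_Mapping.single \<alpha> (1::'k)) ^ count A \<alpha> * (if \<alpha> = x then Poly_Mapping.single \<alpha> 1 else 1))"
    by (rule prod.cong) auto
  also have "\<dots> = (\<Prod>\<alpha>\<in>S. (Poly_Mapping.single \<alpha> (1::'k)) ^ count A \<alpha>) * (\<Prod>\<alpha>\<in>S. (if \<alpha> = x then Poly_Mapping.single \<alpha> 1 else 1))"
    by (rule prod.distrib)
  also have "(\<Prod>\<alpha>\<in>S. (if \<alpha> = x then Poly_Mapping.single \<alpha> (1::'k) else 1)) = Poly_Mapping.single x 1"
    using assms(1) xS by (simp add: prod.delta)
  finally show ?case using add by (simp add: mult_single add.commute)
qed

lemma toric_map_eq:
  "toric_map (f :: 'k::field spoly) = (\<Sum>m\<in>Poly_Mapping.keys f. Poly_Mapping.single (W m) (Poly_Mapping.lookup f m))"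
  unfolding toric_map_def
proof (rule sum.cong[OF refl])
  fix m assume "m \<in> Poly_Mapping.keys f"
  have "(\<Prod>\<alpha>\<in>Poly_Mapping.keys m. (Poly_Mapping.single \<alpha> (1::'k)) ^ Poly_Mapping.lookup m \<alpha>)
     = (\<Prod>\<alpha>\<in>Poly_Mapping.keys m. (Poly_Mapping.single \<alpha> (1::'k)) ^ count (ms m) \<alpha>)" by simp
  also have "\<dots> = Poly_Mapping.single (W m) 1"
    unfolding W_def by (rule prod_pow_single) (auto simp: in_keys_iff simp flip: count_greater_zero_iff)
  finally show "Poly_Mapping.single 0 (Poly_Mapping.lookup f m) *
        (\<Prod>\<alpha>\<in>Poly_Mapping.keys m. Poly_Mapping.single \<alpha> 1 ^ Poly_Mapping.lookup m \<alpha>) =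
        Poly_Mapping.single (W m) (Poly_Mapping.lookup f m)"
    by (simp add: mult_single)
qed

definition L :: "'k::field spoly \<Rightarrow> 'k tpoly" where
  "L f = (\<Sum>m\<in>Poly_Mapping.keys f. Poly_Mapping.single (W m) (Poly_Mapping.lookup f m))"

lemma toric_map_L: "toric_map f = L f"
  by (simp add: toric_map_eq L_def)

lemma L_superset:
  assumes "finite S" "Poly_Mapping.keys f \<subseteq> S"
  shows "L f = (\<Sum>m\<in>S. Poly_Mapping.single (W m) (Poly_Mapping.lookup f m))"
  unfolding L_def
  by (rule sum.mono_neutral_left) (use assms in \<open>auto simp: in_keys_iff\<close>)

lemma L_add: "L (f + g) = L f + L g"
proof -
  let ?S = "Poly_Mapping.keys f \<union> Poly_Mapping.keys g"
  have "L (f + g) = (\<Sum>m\<in>?S. Poly_Mapping.single (W m) (Poly_Mapping.lookup (f+g) m))"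
    by (rule L_superset) (auto simp: keys_add)
  also have "\<dots> = (\<Sum>m\<in>?S. Poly_Mapping.single (W m) (Poly_Mapping.lookup f m))
     + (\<Sum>m\<in>?S. Poly_Mapping.single (W m) (Poly_Mapping.lookup g m))"
    by (simp add: lookup_add single_add sum.distrib)
  also have "\<dots> = L f + L g"
    by (subst (1 2) L_superset[where S="?S"]) auto
  finally show ?thesis .
qed

lemma L_zero[simp]: "L 0 = 0" by (simp add: L_def)

lemma L_single: "L (Poly_Mapping.single m c) = Poly_Mapping.single (W m) c"
  by (simp add: L_def)

lemma L_uminus: "L (- f) = - L f"
proof -
  have "L f + L (-f) = 0" using L_add[of f "-f"] by simp
  then show ?thesis by (metis add.commute eq_neg_iff_add_eq_0)
qed

lemma L_diff: "L (f - g) = L f - L g"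
  using L_add[of f "-g"] L_uminus[of g] by simp

lemma L_sum: "L (sum h I) = (\<Sum>i\<in>I. L (h i))"
  by (induction I rule: infinite_finite_induct) (auto simp: L_add)

lemma expand: "f = (\<Sum>m\<in>Poly_Mapping.keys f. Poly_Mapping.single m (Poly_Mapping.lookup f m))"
  by (rule poly_mapping_eqI) (auto simp: lookup_sum lookup_single' in_keys_iff)

lemma L_mult: "L (f * g) = L f * L g"
proof -
  let ?F = "Poly_Mapping.keys f" and ?G = "Poly_Mapping.keys g"
  have "f * g = (\<Sum>m1\<in>?F. Poly_Mapping.single m1 (Poly_Mapping.lookup f m1)) *
      (\<Sum>m2\<in>?G. Poly_Mapping.single m2 (Poly_Mapping.lookup g m2))"
    by (subst (1) expand, subst (2) expand) (rule refl)
  also have "\<dots> = (\<Sum>m1\<in>?F. \<Sum>m2\<in>?G. Poly_Mapping.single (m1+m2) (Poly_Mapping.lookup f m1 * Poly_Mapping.lookup g m2))"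
    by (simp add: sum_product mult_single)
  finally have fg: "f * g = \<dots>" .
  have "L (f * g) = (\<Sum>m1\<in>?F. \<Sum>m2\<in>?G. Poly_Mapping.single (W m1 + W m2) (Poly_Mapping.lookup f m1 * Poly_Mapping.lookup g m2))"
    by (simp add: fg L_sum L_single W_add)
  also have "\<dots> = L f * L g"
    by (simp add: L_def sum_product mult_single)
  finally show ?thesis .
qed

lemma lookup_L: "Poly_Mapping.lookup (L f) e = (\<Sum>m\<in>Poly_Mapping.keys f. if W m = e then Poly_Mapping.lookup f m else 0)"
  by (simp add: L_def lookup_sum lookup_single')

lemma set_mset_ms: "set_mset (ms m) = Poly_Mapping.keys m"
  by (auto simp: in_keys_iff simp flip: count_greater_zero_iff)

lemma Sring_add: "f \<in> Sring \<Gamma> \<Longrightarrow> g \<in> Sring \<Gamma> \<Longrightarrow> f + g \<in> Sring \<Gamma>"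
  unfolding Sring_def mem_Collect_eq by (meson Un_iff keys_add subsetD)

lemma Sring_uminus: "f \<in> Sring \<Gamma> \<Longrightarrow> - f \<in> Sring \<Gamma>"
  unfolding Sring_def by simp

lemma Sring_diff: "f \<in> Sring \<Gamma> \<Longrightarrow> g \<in> Sring \<Gamma> \<Longrightarrow> f - g \<in> Sring \<Gamma>"
  using Sring_add[of f \<Gamma> "-g"] Sring_uminus[of g] by simp

lemma Sring_zero: "0 \<in> Sring \<Gamma>" unfolding Sring_def by simp

lemma Sring_sum: assumes "\<And>i. i \<in> I \<Longrightarrow> h i \<in> Sring \<Gamma>" shows "sum h I \<in> Sring \<Gamma>"
  using assms by (induction I rule: infinite_finite_induct) (simp_all add: Sring_add Sring_zero)

lemma Sring_mult: "f \<in> Sring \<Gamma> \<Longrightarrow> g \<in> Sring \<Gamma> \<Longrightarrow> f * g \<in> Sring \<Gamma>"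
proof -
  assume f: "f \<in> Sring \<Gamma>" and g: "g \<in> Sring \<Gamma>"
  show ?thesis unfolding Sring_def mem_Collect_eq
  proof
    fix m assume "m \<in> Poly_Mapping.keys (f * g)"
    then have "m \<in> {a + b | a b. a \<in> Poly_Mapping.keys f \<and> b \<in> Poly_Mapping.keys g}"
      using keys_mult by (rule subsetD[rotated])
    then obtain a b where ab: "m = a + b" "a \<in> Poly_Mapping.keys f" "b \<in> Poly_Mapping.keys g"
      by (auto simp only: mem_Collect_eq)
    have "Poly_Mapping.keys a \<subseteq> \<Gamma>" using f ab(2) unfolding Sring_def by simp
    moreover have "Poly_Mapping.keys b \<subseteq> \<Gamma>" using g ab(3) unfolding Sring_def by simp
    ultimately show "Poly_Mapping.keys m \<subseteq> \<Gamma>"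
      unfolding ab(1) by (meson keys_add le_sup_iff order_trans)
  qed
qed

lemma Sring_single: "Poly_Mapping.keys m \<subseteq> \<Gamma> \<Longrightarrow> Poly_Mapping.single m c \<in> Sring \<Gamma>"
  unfolding Sring_def by simp

lemma Sring_const: "Poly_Mapping.single 0 c \<in> Sring \<Gamma>"
  by (rule Sring_single) simp

lemma ideal_inE:
  assumes "f \<in> ideal_in R G"
  obtains F c where "finite F" "F \<subseteq> G" "\<forall>g\<in>F. c g \<in> R" "f = (\<Sum>g\<in>F. c g * g)"
  using assms unfolding ideal_in_def mem_Collect_eq by (elim exE conjE) (rule that; assumption)

lemma ideal_inI:
  assumes "finite F" "F \<subseteq> G" "\<forall>g\<in>F. c g \<in> R" "f = (\<Sum>g\<in>F. c g * g)"
  shows "f \<in> ideal_in R G"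
  unfolding ideal_in_def mem_Collect_eq by (intro exI conjI) (rule assms)+

lemma ideal_zero: "0 \<in> ideal_in R G"
  unfolding ideal_in_def by (rule CollectI, rule exI[of _ "{}"]) simp

lemma ideal_gen: "g \<in> G \<Longrightarrow> c \<in> R \<Longrightarrow> c * g \<in> ideal_in R G"
  unfolding ideal_in_def
  by (rule CollectI, rule exI[of _ "{g}"], rule exI[of _ "\<lambda>_. c"]) simp

lemma ideal_add:
  assumes f1: "f1 \<in> ideal_in (Sring \<Gamma>) G" and f2: "f2 \<in> ideal_in (Sring \<Gamma>) G"
  shows "f1 + f2 \<in> ideal_in (Sring \<Gamma>) G"
proof -
  obtain F1 c1 where F1: "finite F1" "F1 \<subseteq> G" "\<forall>g\<in>F1. c1 g \<in> Sring \<Gamma>" "f1 = (\<Sum>g\<in>F1. c1 g * g)"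
    using f1 by (rule ideal_inE)
  obtain F2 c2 where F2: "finite F2" "F2 \<subseteq> G" "\<forall>g\<in>F2. c2 g \<in> Sring \<Gamma>" "f2 = (\<Sum>g\<in>F2. c2 g * g)"
    using f2 by (rule ideal_inE)
  define c where "c g = (if g \<in> F1 then c1 g else 0) + (if g \<in> F2 then c2 g else 0)" for g
  have "(\<Sum>g\<in>F1 \<union> F2. c g * g) = (\<Sum>g\<in>F1 \<union> F2. (if g \<in> F1 then c1 g * g else 0) + (if g \<in> F2 then c2 g * g else 0))"
    by (rule sum.cong) (auto simp: c_def distrib_right)
  also have "\<dots> = (\<Sum>g\<in>F1 \<union> F2. (if g \<in> F1 then c1 g * g else 0)) + (\<Sum>g\<in>F1 \<union> F2. (if g \<in> F2 then c2 g * g else 0))"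
    by (rule sum.distrib)
  also have "\<dots> = f1 + f2"
    using F1 F2 by (simp add: sum.If_cases Int_absorb1 Int_absorb2)
  finally have "f1 + f2 = (\<Sum>g\<in>F1 \<union> F2. c g * g)" ..
  moreover have "\<forall>g\<in>F1 \<union> F2. c g \<in> Sring \<Gamma>"
    using F1(3) F2(3) unfolding c_def by (intro ballI Sring_add) (simp_all add: Sring_zero)
  ultimately show ?thesis using F1(1,2) F2(1,2) by (intro ideal_inI[where c=c]) auto
qed

lemma ideal_mult:
  assumes f: "f \<in> ideal_in (Sring \<Gamma>) G" and r: "r \<in> Sring \<Gamma>"
  shows "r * f \<in> ideal_in (Sring \<Gamma>) G"
proof -
  obtain F c where F: "finite F" "F \<subseteq> G" "\<forall>g\<in>F. c g \<in> Sring \<Gamma>" "f = (\<Sum>g\<in>F. c g * g)"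
    using f by (rule ideal_inE)
  have "r * f = (\<Sum>g\<in>F. (r * c g) * g)" using F(4) by (simp add: sum_distrib_left mult.assoc)
  moreover have "\<forall>g\<in>F. r * c g \<in> Sring \<Gamma>" using F(3) r by (auto intro: Sring_mult)
  ultimately show ?thesis using F(1,2) by (intro ideal_inI[where c="\<lambda>g. r * c g"]) auto
qed

lemma ideal_sum: assumes "\<And>i. i \<in> I \<Longrightarrow> h i \<in> ideal_in (Sring \<Gamma>) G" shows "sum h I \<in> ideal_in (Sring \<Gamma>) G"
  using assms by (induction I rule: infinite_finite_induct) (simp_all add: ideal_add ideal_zero)

lemma ideal_diff:
  assumes "f1 \<in> ideal_in (Sring \<Gamma>) G" "f2 \<in> ideal_in (Sring \<Gamma>) G"
  shows "f1 - f2 \<in> ideal_in (Sring \<Gamma>) G"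
proof -
  have "Poly_Mapping.single 0 (-1) * f2 \<in> ideal_in (Sring \<Gamma>) G"
    by (rule ideal_mult[OF assms(2) Sring_const])
  moreover have "Poly_Mapping.single 0 (-1) * f2 = - f2"
  proof -
    have "Poly_Mapping.single 0 (-1) = (- 1 :: 'a::field spoly)"
      by (simp add: single_uminus)
    then show ?thesis by simp
  qed
  ultimately show ?thesis using ideal_add[OF assms(1)] by fastforce
qed

definition mstep :: "(nat \<Rightarrow>\<^sub>0 nat) set \<Rightarrow> (nat \<Rightarrow>\<^sub>0 nat) multiset \<Rightarrow> (nat \<Rightarrow>\<^sub>0 nat) multiset \<Rightarrow> bool" where
  "mstep \<Gamma> A B \<longleftrightarrow> (\<exists>C \<alpha> \<beta> \<gamma> \<delta>. A = C + {#\<alpha>,\<beta>#} \<and> B = C + {#\<gamma>,\<delta>#} \<and>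
      \<alpha> \<in> \<Gamma> \<and> \<beta> \<in> \<Gamma> \<and> \<gamma> \<in> \<Gamma> \<and> \<delta> \<in> \<Gamma> \<and> \<alpha> + \<beta> = \<gamma> + \<delta>)"

definition QB :: "(nat \<Rightarrow>\<^sub>0 nat) set \<Rightarrow> 'k::field spoly set" where
  "QB \<Gamma> = {Poly_Mapping.single (mp {#\<alpha>,\<beta>#}) 1 - Poly_Mapping.single (mp {#\<gamma>,\<delta>#}) 1 | \<alpha> \<beta> \<gamma> \<delta>.
      \<alpha> \<in> \<Gamma> \<and> \<beta> \<in> \<Gamma> \<and> \<gamma> \<in> \<Gamma> \<and> \<delta> \<in> \<Gamma> \<and> \<alpha> + \<beta> = \<gamma> + \<delta>}"

lemma deg_mp: "(\<Sum>\<alpha>\<in>Poly_Mapping.keys (mp A). Poly_Mapping.lookup (mp A) \<alpha>) = size A"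
  by (simp add: size_multiset_overloaded_eq)

lemma deg2: "(\<Sum>x\<in>Poly_Mapping.keys (mp {#a,b#}). Poly_Mapping.lookup (mp {#a,b#}) x) = 2"
  by (simp only: deg_mp) simp

lemma QB_hom: "g \<in> QB \<Gamma> \<Longrightarrow> homogeneous_deg 2 g"
proof -
  assume "g \<in> QB \<Gamma>"
  then obtain \<alpha> \<beta> \<gamma> \<delta> where g: "g = Poly_Mapping.single (mp {#\<alpha>,\<beta>#}) 1 - Poly_Mapping.single (mp {#\<gamma>,\<delta>#}) 1"
    unfolding QB_def mem_Collect_eq by (elim exE conjE) (rule that; assumption)
  have "Poly_Mapping.keys g \<subseteq> {mp {#\<alpha>,\<beta>#}, mp {#\<gamma>,\<delta>#}}"
    unfolding g by (rule order_trans[OF keys_diff]) auto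
  show ?thesis unfolding homogeneous_deg_def
  proof
    fix m assume "m \<in> Poly_Mapping.keys g"
    then have "m = mp {#\<alpha>,\<beta>#} \<or> m = mp {#\<gamma>,\<delta>#}" using \<open>Poly_Mapping.keys g \<subseteq> _\<close> by blast
    then show "(\<Sum>\<alpha>\<in>Poly_Mapping.keys m. Poly_Mapping.lookup m \<alpha>) = 2"
      by (elim disjE) (simp_all only: deg2)
  qed
qed

lemma QB_Sring: "g \<in> QB \<Gamma> \<Longrightarrow> g \<in> Sring \<Gamma>"
  unfolding QB_def by (auto intro!: Sring_diff Sring_single)

lemma QB_toric: "g \<in> QB \<Gamma> \<Longrightarrow> g \<in> toric_ideal \<Gamma>"
proof -
  assume g: "g \<in> QB \<Gamma>"
  then obtain \<alpha> \<beta> \<gamma> \<delta> where gg: "g = Poly_Mapping.single (mp {#\<alpha>,\<beta>#}) 1 - Poly_Mapping.single (mp {#\<gamma>,\<delta>#}) 1" "\<alpha> + \<beta> = \<gamma> + \<delta>"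
    unfolding QB_def mem_Collect_eq by (elim exE conjE) (rule that; assumption)
  have "L g = 0" unfolding gg(1) L_diff L_single W_mp using gg(2) by (simp add: add.commute)
  then show ?thesis unfolding toric_ideal_def using QB_Sring[OF g] by (simp add: toric_map_L)
qed

lemma ideal_sub_toric:
  assumes "G \<subseteq> toric_ideal \<Gamma>"
  shows "ideal_in (Sring \<Gamma>) G \<subseteq> toric_ideal \<Gamma>"
proof
  fix f assume "f \<in> ideal_in (Sring \<Gamma>) G"
  then obtain F c where F: "finite F" "F \<subseteq> G" "\<forall>g\<in>F. c g \<in> Sring \<Gamma>" "f = (\<Sum>g\<in>F. c g * g)"
    by (rule ideal_inE)
  have gS: "\<And>g. g \<in> F \<Longrightarrow> g \<in> Sring \<Gamma> \<and> L g = 0"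
    using F(2) assms unfolding toric_ideal_def by (auto simp: toric_map_L)
  have "f \<in> Sring \<Gamma>" unfolding F(4) using F(3) gS by (auto intro!: Sring_sum Sring_mult)
  moreover have "L f = 0" unfolding F(4) using gS by (simp add: L_sum L_mult)
  ultimately show "f \<in> toric_ideal \<Gamma>" unfolding toric_ideal_def by (simp add: toric_map_L)
qed

lemma mstep_Gamma: "mstep \<Gamma> A B \<Longrightarrow> set_mset A \<subseteq> \<Gamma> \<Longrightarrow> set_mset B \<subseteq> \<Gamma>"
  unfolding mstep_def by (elim exE conjE) simp

lemma conn_Gamma: "(mstep \<Gamma>)\<^sup>*\<^sup>* A B \<Longrightarrow> set_mset A \<subseteq> \<Gamma> \<Longrightarrow> set_mset B \<subseteq> \<Gamma>"
  by (induction rule: rtranclp_induct) (auto dest: mstep_Gamma)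

lemma conn_binom:
  assumes "(mstep \<Gamma>)\<^sup>*\<^sup>* A B" "set_mset A \<subseteq> \<Gamma>"
  shows "Poly_Mapping.single (mp A) (1::'k::field) - Poly_Mapping.single (mp B) 1 \<in> ideal_in (Sring \<Gamma>) (QB \<Gamma>)"
  using assms
proof (induction rule: rtranclp_induct)
  case base
  show ?case using ideal_zero[of "Sring \<Gamma>" "QB \<Gamma>"] by simp
next
  case (step B C)
  have BG: "set_mset B \<subseteq> \<Gamma>" using conn_Gamma step by blast
  obtain D \<alpha> \<beta> \<gamma> \<delta> where st: "B = D + {#\<alpha>,\<beta>#}" "C = D + {#\<gamma>,\<delta>#}" "\<alpha> \<in> \<Gamma>" "\<beta> \<in> \<Gamma>" "\<gamma> \<in> \<Gamma>" "\<delta> \<in> \<Gamma>" "\<alpha> + \<beta> = \<gamma> + \<delta>"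
    using step(2) unfolding mstep_def by (elim exE conjE) (rule that; assumption)
  have q: "Poly_Mapping.single (mp {#\<alpha>,\<beta>#}) (1::'k) - Poly_Mapping.single (mp {#\<gamma>,\<delta>#}) 1 \<in> QB \<Gamma>"
    unfolding QB_def
    by (rule CollectI, rule exI[of _ \<alpha>], rule exI[of _ \<beta>], rule exI[of _ \<gamma>], rule exI[of _ \<delta>]) (use st in simp)
  have DS: "Poly_Mapping.single (mp D) (1::'k) \<in> Sring \<Gamma>"
    by (rule Sring_single) (use BG st(1) in auto)
  have "Poly_Mapping.single (mp B) (1::'k) - Poly_Mapping.single (mp C) 1
     = Poly_Mapping.single (mp D) 1 * (Poly_Mapping.single (mp {#\<alpha>,\<beta>#}) (1::'k) - Poly_Mapping.single (mp {#\<gamma>,\<delta>#}) 1)"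
    by (simp only: st(1,2) mp_add right_diff_distrib mult_single mult_1)
  then have "Poly_Mapping.single (mp B) (1::'k) - Poly_Mapping.single (mp C) 1 \<in> ideal_in (Sring \<Gamma>) (QB \<Gamma>)"
    using ideal_gen[OF q DS] by simp
  from ideal_add[OF step(3)[OF step(4)] this] show ?case by simp
qed

lemma reduction:
  fixes \<Gamma> :: "(nat \<Rightarrow>\<^sub>0 nat) set"
  assumes conn: "\<And>A B. set_mset A \<subseteq> \<Gamma> \<Longrightarrow> set_mset B \<subseteq> \<Gamma> \<Longrightarrow> sum_mset A = sum_mset B \<Longrightarrow> (mstep \<Gamma>)\<^sup>*\<^sup>* A B"
  shows "\<exists>G :: 'k::field spoly set. (\<forall>g\<in>G. homogeneous_deg 2 g) \<and>
           G \<subseteq> toric_ideal \<Gamma> \<and> toric_ideal \<Gamma> = ideal_in (Sring \<Gamma>) G"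
proof -
  have h1: "\<forall>g\<in>QB \<Gamma>. homogeneous_deg 2 (g::'k spoly)" using QB_hom by blast
  have sub: "QB \<Gamma> \<subseteq> (toric_ideal \<Gamma> :: 'k spoly set)" using QB_toric by blast
  have eq: "toric_ideal \<Gamma> = (ideal_in (Sring \<Gamma>) (QB \<Gamma>) :: 'k spoly set)"
  proof
    show "ideal_in (Sring \<Gamma>) (QB \<Gamma>) \<subseteq> (toric_ideal \<Gamma> :: 'k spoly set)" using sub by (rule ideal_sub_toric)
    show "toric_ideal \<Gamma> \<subseteq> (ideal_in (Sring \<Gamma>) (QB \<Gamma>) :: 'k spoly set)"
    proof
      fix f :: "'k spoly" assume ft: "f \<in> toric_ideal \<Gamma>"
      let ?K = "Poly_Mapping.keys f"
      let ?c = "Poly_Mapping.lookup f"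
      have fS: "\<And>m. m \<in> ?K \<Longrightarrow> Poly_Mapping.keys m \<subseteq> \<Gamma>" using ft unfolding toric_ideal_def Sring_def by blast
      have L0: "L f = 0" using ft unfolding toric_ideal_def by (simp add: toric_map_L)
      define R where "R e = (SOME m. m \<in> ?K \<and> W m = e)" for e
      have R: "\<And>m. m \<in> ?K \<Longrightarrow> R (W m) \<in> ?K \<and> W (R (W m)) = W m"
        unfolding R_def by (rule someI) blast
      define b where "b m = Poly_Mapping.single m (1::'k) - Poly_Mapping.single (R (W m)) 1" for m
      have bI: "b m \<in> ideal_in (Sring \<Gamma>) (QB \<Gamma>)" if m: "m \<in> ?K" for m
      proof -
        have k1: "Poly_Mapping.keys m \<subseteq> \<Gamma>" using fS[OF m] .
        have k2: "Poly_Mapping.keys (R (W m)) \<subseteq> \<Gamma>" using fS R[OF m] by blast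
        have "(mstep \<Gamma>)\<^sup>*\<^sup>* (ms m) (ms (R (W m)))"
          by (rule conn) (use k1 k2 R[OF m] in \<open>simp_all add: set_mset_ms W_def\<close>)
        from conn_binom[OF this] show ?thesis unfolding b_def
          using k1 by (simp add: set_mset_ms)
      qed
      define Z where "Z = (\<Sum>m\<in>?K. Poly_Mapping.single (R (W m)) (?c m))"
      have Z0: "Z = 0"
      proof (rule poly_mapping_eqI)
        fix m'
        show "Poly_Mapping.lookup Z m' = Poly_Mapping.lookup 0 m'"
        proof (cases "\<exists>m0\<in>?K. R (W m0) = m'")
          case False
          then show ?thesis unfolding Z_def by (auto simp: lookup_sum lookup_single')
        next
          case True
          then obtain m0 where m0: "m0 \<in> ?K" "R (W m0) = m'" by blast
          have eq: "\<And>m. m \<in> ?K \<Longrightarrow> (R (W m) = m') = (W m = W m0)"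
            using R m0 by metis
          have "Poly_Mapping.lookup Z m' = (\<Sum>m\<in>?K. if W m = W m0 then ?c m else 0)"
            unfolding Z_def lookup_sum lookup_single' by (rule sum.cong) (auto simp: eq)
          also have "\<dots> = Poly_Mapping.lookup (L f) (W m0)" by (simp add: lookup_L)
          finally show ?thesis by (simp add: L0)
        qed
      qed
      have "f = (\<Sum>m\<in>?K. Poly_Mapping.single m (?c m))" by (rule expand)
      also have "\<dots> = (\<Sum>m\<in>?K. Poly_Mapping.single 0 (?c m) * b m + Poly_Mapping.single (R (W m)) (?c m))"
        by (rule sum.cong[OF refl]) (simp add: b_def right_diff_distrib mult_single)
      also have "\<dots> = (\<Sum>m\<in>?K. Poly_Mapping.single 0 (?c m) * b m) + Z"
        unfolding Z_def by (rule sum.distrib)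
      finally have fe: "f = (\<Sum>m\<in>?K. Poly_Mapping.single 0 (?c m) * b m)" using Z0 by simp
      have "(\<Sum>m\<in>?K. Poly_Mapping.single 0 (?c m) * b m) \<in> ideal_in (Sring \<Gamma>) (QB \<Gamma>)"
        by (rule ideal_sum, rule ideal_mult[OF bI Sring_const])
      then show "f \<in> ideal_in (Sring \<Gamma>) (QB \<Gamma>)" using fe by simp
    qed
  qed
  show ?thesis by (intro exI[of _ "QB \<Gamma>"] conjI) (rule h1, rule sub, rule eq)
qed

definition sh :: "(nat \<Rightarrow>\<^sub>0 nat) \<Rightarrow> nat \<Rightarrow> nat \<Rightarrow> nat \<Rightarrow> (nat \<Rightarrow>\<^sub>0 nat)" where
  "sh x i j k = x + Poly_Mapping.single i k - Poly_Mapping.single j k"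

lemma sh_lookup: "Poly_Mapping.lookup (sh x i j k) l = Poly_Mapping.lookup x l + (if i = l then k else 0) - (if j = l then k else 0)"
  by (simp add: sh_def lookup_minus lookup_add lookup_single')

lemma lookup_sum_mset: "Poly_Mapping.lookup (sum_mset A) l = (\<Sum>\<beta>\<in>#A. Poly_Mapping.lookup \<beta> l)"
  by (induction A) (auto simp: lookup_add)

lemma sum_remove:
  fixes A :: "('a \<Rightarrow>\<^sub>0 nat) multiset"
  shows "\<alpha> \<in># A \<Longrightarrow> Poly_Mapping.lookup (sum_mset A) l = Poly_Mapping.lookup \<alpha> l + Poly_Mapping.lookup (sum_mset (A - {#\<alpha>#})) l"
  by (subst sum_mset.remove[of \<alpha> A]) (simp_all add: lookup_add)

lemma elem_le_sum:
  fixes A :: "('a \<Rightarrow>\<^sub>0 nat) multiset"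
  shows "\<alpha> \<in># A \<Longrightarrow> Poly_Mapping.lookup \<alpha> l \<le> Poly_Mapping.lookup (sum_mset A) l"
  using sum_remove[of \<alpha> A l] by simp

lemma sum_pos_ex: "0 < (\<Sum>x\<in>#M. (f x :: nat)) \<Longrightarrow> \<exists>x\<in>#M. 0 < f x"
  by (induction M) auto

lemma exists_pos:
  fixes A :: "('a \<Rightarrow>\<^sub>0 nat) multiset"
  assumes "\<alpha> \<in># A" "Poly_Mapping.lookup \<alpha> l < Poly_Mapping.lookup (sum_mset A) l"
  shows "\<exists>\<beta>\<in>#A - {#\<alpha>#}. 0 < Poly_Mapping.lookup \<beta> l"
proof -
  have "0 < Poly_Mapping.lookup (sum_mset (A - {#\<alpha>#})) l" using assms(2) sum_remove[OF assms(1), of l] by linarith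
  then have "0 < (\<Sum>\<beta>\<in>#A - {#\<alpha>#}. Poly_Mapping.lookup \<beta> l)" by (simp only: lookup_sum_mset)
  then show ?thesis by (rule sum_pos_ex)
qed

lemma split2: "\<alpha> \<in># A \<Longrightarrow> \<beta> \<in># A - {#\<alpha>#} \<Longrightarrow> A = (A - {#\<alpha>#} - {#\<beta>#}) + {#\<alpha>, \<beta>#}"
  by (metis add_mset_add_single add_mset_commute insert_DiffM union_mset_add_mset_right)

locale comb =
  fixes n d :: nat
  assumes n2: "2 \<le> n" and d2: "2 \<le> d" and d3: "d \<noteq> 3"
begin

abbreviation "p \<equiv> n - 2"
abbreviation "q \<equiv> n - 1"
abbreviation "G0 \<equiv> Vnd n d - {avec n d}"

definition tot :: "(nat \<Rightarrow>\<^sub>0 nat) \<Rightarrow> nat" where "tot x = (\<Sum>l<n. Poly_Mapping.lookup x l)"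
definition wt :: "nat \<Rightarrow> nat" where "wt l = (if l = n - 2 then n * d + 1 else n - l)"
definition phi :: "(nat \<Rightarrow>\<^sub>0 nat) \<Rightarrow> nat" where "phi x = (\<Sum>l<n. Poly_Mapping.lookup x l * wt l)"
definition rk :: "nat \<Rightarrow> nat" where "rk l = (if l = n - 2 then 0 else Suc l)"
definition sat :: "(nat \<Rightarrow>\<^sub>0 nat) \<Rightarrow> (nat \<Rightarrow>\<^sub>0 nat) \<Rightarrow> bool" where
  "sat s \<alpha> \<longleftrightarrow> (\<forall>i<n. \<forall>j<n. rk i < rk j \<longrightarrow> 0 < Poly_Mapping.lookup \<alpha> j \<longrightarrow> Poly_Mapping.lookup \<alpha> i = Poly_Mapping.lookup s i)"
definition exc :: "(nat \<Rightarrow>\<^sub>0 nat) \<Rightarrow> bool" where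
  "exc s \<longleftrightarrow> Poly_Mapping.lookup s (n-2) = d + 1 \<and> (\<forall>h<n-2. Poly_Mapping.lookup s h = 0)"
definition estar :: "nat \<Rightarrow>\<^sub>0 nat" where
  "estar = Poly_Mapping.single (n-2) (d-1) + Poly_Mapping.single (n-1) 1"
definition final :: "(nat \<Rightarrow>\<^sub>0 nat) \<Rightarrow> (nat \<Rightarrow>\<^sub>0 nat) \<Rightarrow> bool" where
  "final s \<alpha> \<longleftrightarrow> (if exc s then \<alpha> = estar else sat s \<alpha>)"

abbreviation "conn \<equiv> (mstep G0)\<^sup>*\<^sup>*"

lemma pq: "p < n" "q < n" "p \<noteq> q" "q = Suc p" using n2 by auto

lemma keys_sub_iff: "Poly_Mapping.keys x \<subseteq> {..<n} \<longleftrightarrow> (\<forall>l. n \<le> l \<longrightarrow> Poly_Mapping.lookup x l = 0)"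
  by (metis in_keys_iff lessThan_iff subset_eq not_le)

lemma V_iff: "x \<in> Vnd n d \<longleftrightarrow> (\<forall>l. n \<le> l \<longrightarrow> Poly_Mapping.lookup x l = 0) \<and> tot x = d"
  unfolding Vnd_def tot_def mem_Collect_eq keys_sub_iff by auto

lemma V_zero: "x \<in> Vnd n d \<Longrightarrow> n \<le> l \<Longrightarrow> Poly_Mapping.lookup x l = 0"
  using V_iff by blast

lemma V_tot: "x \<in> Vnd n d \<Longrightarrow> tot x = d"
  using V_iff by blast

lemma V_intro: "(\<And>l. n \<le> l \<Longrightarrow> Poly_Mapping.lookup x l = 0) \<Longrightarrow> tot x = d \<Longrightarrow> x \<in> Vnd n d"
  using V_iff by blast

lemma tot_add: "tot (x + y) = tot x + tot y"
  by (simp add: tot_def lookup_add sum.distrib)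

lemma phi_add: "phi (x + y) = phi x + phi y"
  by (simp add: phi_def lookup_add sum.distrib algebra_simps)

lemma tot_single: "l < n \<Longrightarrow> tot (Poly_Mapping.single l k) = k"
  by (simp add: tot_def lookup_single' sum.delta)

lemma phi_single: "l < n \<Longrightarrow> phi (Poly_Mapping.single l k) = k * wt l"
proof -
  assume l: "l < n"
  have "phi (Poly_Mapping.single l k) = (\<Sum>m<n. if l = m then k * wt l else 0)"
    unfolding phi_def lookup_single' by (rule sum.cong) auto
  then show ?thesis using l by (simp add: sum.delta)
qed

lemma lookup_a: "Poly_Mapping.lookup (avec n d) l = (if l = n-2 then 1 else if l = n-1 then d - 1 else 0)"
  using n2 by (simp add: avec_def lookup_add lookup_single')

lemma V_le: "x \<in> Vnd n d \<Longrightarrow> Poly_Mapping.lookup x l \<le> d"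
proof -
  assume x: "x \<in> Vnd n d"
  show ?thesis
  proof (cases "l < n")
    case True
    then have "Poly_Mapping.lookup x l \<le> tot x" unfolding tot_def by (intro member_le_sum) auto
    then show ?thesis using V_tot[OF x] by simp
  next
    case False then show ?thesis using V_zero[OF x] by simp
  qed
qed

lemma wt_le: "wt l \<le> n * d + 1"
  using d2 by (simp add: wt_def) (metis diff_le_self le_SucI mult_le_mono2 nat_mult_1_right one_le_numeral order_trans)

lemma phi_bound: "x \<in> Vnd n d \<Longrightarrow> phi x \<le> (n * d + 1) * d"
proof -
  assume x: "x \<in> Vnd n d"
  have "phi x \<le> (\<Sum>l<n. Poly_Mapping.lookup x l * (n * d + 1))"
    unfolding phi_def by (intro sum_mono mult_le_mono2 wt_le)
  also have "\<dots> = tot x * (n * d + 1)" unfolding tot_def by (rule sum_distrib_right[symmetric])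
  finally show ?thesis using V_tot[OF x] by (simp add: mult.commute)
qed

lemma phi_p0: "x \<in> Vnd n d \<Longrightarrow> Poly_Mapping.lookup x p = 0 \<Longrightarrow> phi x \<le> n * d"
proof -
  assume x: "x \<in> Vnd n d" and x0: "Poly_Mapping.lookup x p = 0"
  have "phi x \<le> (\<Sum>l<n. Poly_Mapping.lookup x l * n)"
    unfolding phi_def
  proof (rule sum_mono)
    fix l assume "l \<in> {..<n}"
    show "Poly_Mapping.lookup x l * wt l \<le> Poly_Mapping.lookup x l * n"
    proof (cases "l = p")
      case True then show ?thesis using x0 by simp
    next
      case False then show ?thesis unfolding wt_def by (intro mult_le_mono2) simp
    qed
  qed
  also have "\<dots> = tot x * n" unfolding tot_def by (rule sum_distrib_right[symmetric])
  finally show ?thesis using V_tot[OF x] by (simp add: mult.commute)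
qed

lemma phi_ppos: "0 < Poly_Mapping.lookup x p \<Longrightarrow> n * d + 1 \<le> phi x"
proof -
  assume "0 < Poly_Mapping.lookup x p"
  then have "1 * (n * d + 1) \<le> Poly_Mapping.lookup x p * (n * d + 1)" by (intro mult_le_mono1) simp
  then have "n * d + 1 \<le> Poly_Mapping.lookup x p * wt p" by (simp add: wt_def)
  also have "\<dots> \<le> phi x" unfolding phi_def by (rule member_le_sum) (use pq in auto)
  finally show ?thesis .
qed

lemma max_p:
  assumes "x \<in> Vnd n d" "\<forall>\<beta>\<in>#A. phi \<beta> \<le> phi x" "\<beta> \<in># A" "0 < Poly_Mapping.lookup \<beta> p"
  shows "0 < Poly_Mapping.lookup x p"
proof (rule ccontr)
  assume "\<not> 0 < Poly_Mapping.lookup x p"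
  then have "phi x \<le> n * d" using phi_p0[OF assms(1)] by simp
  moreover have "n * d + 1 \<le> phi \<beta>" by (rule phi_ppos[OF assms(4)])
  moreover have "phi \<beta> \<le> phi x" using assms(2,3) by blast
  ultimately show False by linarith
qed

lemma n_le_nd: "n \<le> n * d" using d2 by simp

lemma rk_lt_wt: assumes "i < n" "j < n" "rk i < rk j" shows "wt j < wt i"
proof (cases "i = p")
  case True
  then have "j \<noteq> p" using assms(3) by (auto simp: rk_def)
  then have "wt j \<le> n" by (simp add: wt_def)
  moreover have "wt i = n * d + 1" using True by (simp add: wt_def)
  ultimately show ?thesis using n_le_nd by linarith
next
  case False
  then have "j \<noteq> p" using assms(3) by (auto simp: rk_def)
  then have "i < j" using False assms(3) by (simp add: rk_def)
  then show ?thesis using False \<open>j \<noteq> p\<close> assms(2) by (simp add: wt_def)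
qed

lemma wt_p: "l < n \<Longrightarrow> l \<noteq> p \<Longrightarrow> wt l < wt p"
  by (rule rk_lt_wt) (auto simp: rk_def)

lemma wt_hq: "h < p \<Longrightarrow> wt q < wt h"
  by (rule rk_lt_wt) (auto simp: rk_def)

lemma sh_eq: "k \<le> Poly_Mapping.lookup x j \<Longrightarrow> sh x i j k + Poly_Mapping.single j k = x + Poly_Mapping.single i k"
  by (rule poly_mapping_eqI) (auto simp: sh_lookup lookup_add lookup_single')

lemma sh_V: assumes "x \<in> Vnd n d" "i < n" "j < n" "k \<le> Poly_Mapping.lookup x j"
  shows "sh x i j k \<in> Vnd n d"
proof -
  have "tot (sh x i j k) + k = tot x + k"
    using arg_cong[OF sh_eq[OF assms(4), of i], of tot] assms by (simp add: tot_add tot_single)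
  then have "tot (sh x i j k) = d" using V_tot[OF assms(1)] by simp
  moreover have "\<And>l. n \<le> l \<Longrightarrow> Poly_Mapping.lookup (sh x i j k) l = 0"
    using V_zero[OF assms(1)] assms(2,3) by (simp add: sh_lookup)
  ultimately show ?thesis by (intro V_intro)
qed

lemma sh_phi: assumes "i < n" "j < n" "k \<le> Poly_Mapping.lookup x j" "0 < k" "wt j < wt i"
  shows "phi x < phi (sh x i j k)"
proof -
  have "phi (sh x i j k) + k * wt j = phi x + k * wt i"
    using arg_cong[OF sh_eq[OF assms(3), of i], of phi] assms by (simp add: phi_add phi_single)
  moreover have "k * wt j < k * wt i" using assms by simp
  ultimately show ?thesis by linarith
qed

lemma sh_pair: "k \<le> Poly_Mapping.lookup x j \<Longrightarrow> k \<le> Poly_Mapping.lookup y i \<Longrightarrow> x + y = sh x i j k + sh y j i k"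
  by (rule poly_mapping_eqI) (auto simp: sh_lookup lookup_add)

lemma sh_G0: "x \<in> Vnd n d \<Longrightarrow> i < n \<Longrightarrow> j < n \<Longrightarrow> k \<le> Poly_Mapping.lookup x j \<Longrightarrow> sh x i j k \<noteq> avec n d \<Longrightarrow> sh x i j k \<in> G0"
  using sh_V by blast

lemma neq_a: "Poly_Mapping.lookup x l \<noteq> Poly_Mapping.lookup (avec n d) l \<Longrightarrow> x \<noteq> avec n d" by auto

lemma pqform:
  assumes "x \<in> Vnd n d" "\<forall>h<n-2. Poly_Mapping.lookup x h = 0"
  shows "Poly_Mapping.lookup x q = d - Poly_Mapping.lookup x p"
    and "x = Poly_Mapping.single p (Poly_Mapping.lookup x p) + Poly_Mapping.single q (d - Poly_Mapping.lookup x p)"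
proof -
  have "tot x = (\<Sum>l\<in>{p,q}. Poly_Mapping.lookup x l)"
    unfolding tot_def
  proof (rule sum.mono_neutral_right)
    show "\<forall>i\<in>{..<n} - {p, q}. Poly_Mapping.lookup x i = 0"
    proof
      fix i assume "i \<in> {..<n} - {p, q}"
      then have "i < n - 2" by auto
      then show "Poly_Mapping.lookup x i = 0" using assms(2) by blast
    qed
  qed (use pq in auto)
  then have t: "Poly_Mapping.lookup x p + Poly_Mapping.lookup x q = d" using V_tot[OF assms(1)] pq by simp
  then show "Poly_Mapping.lookup x q = d - Poly_Mapping.lookup x p" by simp
  show "x = Poly_Mapping.single p (Poly_Mapping.lookup x p) + Poly_Mapping.single q (d - Poly_Mapping.lookup x p)"
  proof (rule poly_mapping_eqI)
    fix l
    show "Poly_Mapping.lookup x l = Poly_Mapping.lookup (Poly_Mapping.single p (Poly_Mapping.lookup x p) + Poly_Mapping.single q (d - Poly_Mapping.lookup x p)) l"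
    proof (cases "l < n - 2")
      case True then show ?thesis using assms(2) pq by (simp add: lookup_add lookup_single')
    next
      case False
      then consider "l = p" | "l = q" | "n \<le> l" by linarith
      then show ?thesis
      proof cases
        case 1 then show ?thesis using pq by (simp add: lookup_add lookup_single')
      next
        case 2 then show ?thesis using pq t by (simp add: lookup_add lookup_single')
      next
        case 3 then show ?thesis using pq V_zero[OF assms(1) 3] by (simp add: lookup_add lookup_single')
      qed
    qed
  qed
qed

lemma pq_is_a: assumes "x \<in> Vnd n d" "\<forall>h<n-2. Poly_Mapping.lookup x h = 0" "Poly_Mapping.lookup x p = 1"
  shows "x = avec n d"
proof -
  have "x = Poly_Mapping.single p (Poly_Mapping.lookup x p) + Poly_Mapping.single q (d - Poly_Mapping.lookup x p)"
    by (rule pqform(2)[OF assms(1,2)])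
  also have "\<dots> = avec n d" using assms(3) by (simp add: avec_def)
  finally show ?thesis .
qed

end

context comb begin

definition good :: "(nat \<Rightarrow>\<^sub>0 nat) multiset \<Rightarrow> (nat \<Rightarrow>\<^sub>0 nat) \<Rightarrow> bool" where
  "good A \<alpha> \<longleftrightarrow> (\<exists>A'. conn A A' \<and> (\<exists>\<gamma>\<in>#A'. phi \<alpha> < phi \<gamma>))"

lemma step_intro:
  assumes "A = C + {#x,y#}" "x \<in> G0" "y \<in> G0" "\<gamma> \<in> G0" "\<delta> \<in> G0" "x + y = \<gamma> + \<delta>"
  shows "mstep G0 A (C + {#\<gamma>,\<delta>#})"
  unfolding mstep_def
  by (intro exI[of _ C] exI[of _ x] exI[of _ y] exI[of _ \<gamma>] exI[of _ \<delta>] conjI) (use assms in simp_all)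

lemma good_trans: "conn A B \<Longrightarrow> good B \<alpha> \<Longrightarrow> good A \<alpha>"
  unfolding good_def by (meson rtranclp_trans)

lemma smove:
  assumes "A = C + {#x,y#}" "x \<in> G0" "y \<in> G0" "i < n" "j < n"
    "k \<le> Poly_Mapping.lookup x j" "k \<le> Poly_Mapping.lookup y i"
    "sh x i j k \<noteq> avec n d" "sh y j i k \<noteq> avec n d" "phi \<alpha> < phi (sh x i j k)"
  shows "good A \<alpha>"
proof -
  have g: "sh x i j k \<in> G0" using sh_V assms by blast
  have h: "sh y j i k \<in> G0" using sh_V assms by blast
  have "mstep G0 A (C + {#sh x i j k, sh y j i k#})"
    by (rule step_intro[OF assms(1-3) g h sh_pair[OF assms(6,7)]])
  then have "conn A (C + {#sh x i j k, sh y j i k#})" by blast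
  then show ?thesis unfolding good_def using assms(10) by force
qed

lemma rk_p: "rk l = 0 \<longleftrightarrow> l = p" by (simp add: rk_def)
lemma rk_le: "l < n \<Longrightarrow> rk l \<le> n" by (simp add: rk_def)
lemma rk_q: "rk q = n" using n2 by (simp add: rk_def)

lemma G0_V: "x \<in> G0 \<Longrightarrow> x \<in> Vnd n d" by simp

lemma in_A_le_s: fixes A :: "(nat \<Rightarrow>\<^sub>0 nat) multiset" shows "\<alpha> \<in># A \<Longrightarrow> Poly_Mapping.lookup \<alpha> l \<le> Poly_Mapping.lookup (sum_mset A) l"
  by (rule elem_le_sum)

lemma lookup_a_p: "Poly_Mapping.lookup (avec n d) p = 1" by (simp add: lookup_a)
lemma lookup_a_h: "h < n - 2 \<Longrightarrow> Poly_Mapping.lookup (avec n d) h = 0" by (simp add: lookup_a)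

lemma step_exc:
  assumes A: "set_mset A \<subseteq> G0" and \<alpha>: "\<alpha> \<in># A" and mx: "\<forall>\<beta>\<in>#A. phi \<beta> \<le> phi \<alpha>"
    and ex: "exc (sum_mset A)" and ne: "\<alpha> \<noteq> estar"
  shows "good A \<alpha>"
proof -
  let ?s = "sum_mset A"
  have sp: "Poly_Mapping.lookup ?s p = d + 1" and sh0: "\<And>h. h < n - 2 \<Longrightarrow> Poly_Mapping.lookup ?s h = 0"
    using ex unfolding exc_def by auto
  have \<alpha>G: "\<alpha> \<in> G0" using A \<alpha> by blast
  then have \<alpha>V: "\<alpha> \<in> Vnd n d" by simp
  have H0: "\<And>\<beta> h. \<beta> \<in># A \<Longrightarrow> h < n - 2 \<Longrightarrow> Poly_Mapping.lookup \<beta> h = 0"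
    using in_A_le_s sh0 by (metis le_zero_eq)
  have \<alpha>H: "\<forall>h<n-2. Poly_Mapping.lookup \<alpha> h = 0" using H0 \<alpha> by blast
  define x where "x = Poly_Mapping.lookup \<alpha> p"
  have \<alpha>q: "Poly_Mapping.lookup \<alpha> q = d - x" using pqform(1)[OF \<alpha>V \<alpha>H] x_def by simp
  have xd: "x \<le> d" using V_le[OF \<alpha>V] x_def by simp
  have xd1: "x \<noteq> d - 1"
  proof
    assume "x = d - 1"
    then have "\<alpha> = Poly_Mapping.single p (d-1) + Poly_Mapping.single q (d - (d - 1))"
      using pqform(2)[OF \<alpha>V \<alpha>H] x_def by simp
    also have "\<dots> = estar" using d2 by (simp add: estar_def)
    finally show False using ne by simp
  qed
  have xlt: "x < Poly_Mapping.lookup ?s p" using xd sp by simp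
  then obtain \<beta> where \<beta>: "\<beta> \<in># A - {#\<alpha>#}" "0 < Poly_Mapping.lookup \<beta> p"
    using exists_pos[OF \<alpha>, of p] x_def by auto
  have \<beta>A: "\<beta> \<in># A" using \<beta>(1) by (meson in_diffD)
  have \<beta>G: "\<beta> \<in> G0" using A \<beta>A by blast
  then have \<beta>V: "\<beta> \<in> Vnd n d" by simp
  have \<beta>H: "\<forall>h<n-2. Poly_Mapping.lookup \<beta> h = 0" using H0 \<beta>A by blast
  define y where "y = Poly_Mapping.lookup \<beta> p"
  have \<beta>q: "Poly_Mapping.lookup \<beta> q = d - y" using pqform(1)[OF \<beta>V \<beta>H] y_def by simp
  have yd: "y \<le> d" using V_le[OF \<beta>V] y_def by simp
  have y1: "y \<noteq> 1" using pq_is_a[OF \<beta>V \<beta>H] \<beta>G y_def by auto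
  have sumle: "x + y \<le> d + 1"
  proof -
    have "Poly_Mapping.lookup ?s p = x + Poly_Mapping.lookup (sum_mset (A - {#\<alpha>#})) p"
      using sum_remove[OF \<alpha>] x_def by simp
    moreover have "y \<le> Poly_Mapping.lookup (sum_mset (A - {#\<alpha>#})) p" using elem_le_sum[OF \<beta>(1)] y_def by simp
    ultimately show ?thesis using sp by simp
  qed
  have xnd: "x \<noteq> d"
  proof
    assume xd': "x = d"
    then have "y \<le> 1" using sumle by simp
    then have "y = 1" using \<beta>(2) y_def by simp
    then show False using y1 by simp
  qed
  have x2: "x + 2 \<le> d" using xd xd1 xnd by linarith
  have Asplit: "A = (A - {#\<alpha>#} - {#\<beta>#}) + {#\<alpha>, \<beta>#}" by (rule split2[OF \<alpha> \<beta>(1)])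
  have wqp: "wt q < wt p" using pq by (intro wt_p) auto
  show ?thesis
  proof (cases "x + y \<le> d")
    case True
    have yle: "y \<le> Poly_Mapping.lookup \<alpha> q" using \<alpha>q True by simp
    show ?thesis
    proof (rule smove[OF Asplit \<alpha>G \<beta>G, of p q y])
      show "sh \<alpha> p q y \<noteq> avec n d"
        by (rule neq_a[of _ p]) (use pq True \<beta>(2) y1 y_def x_def in \<open>simp add: sh_lookup lookup_a\<close>)
      show "sh \<beta> q p y \<noteq> avec n d"
        by (rule neq_a[of _ p]) (use pq y_def in \<open>simp add: sh_lookup lookup_a\<close>)
      show "phi \<alpha> < phi (sh \<alpha> p q y)"
        by (rule sh_phi) (use pq yle wqp \<beta>(2) y_def in auto)
    qed (use pq \<alpha>q True y_def in auto)
  next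
    case False
    then have xy: "x + y = d + 1" using sumle by simp
    have d2': "d \<noteq> 2" using xy x2 yd by auto
    define k where "k = d - 1 - x"
    have k0: "0 < k" using x2 k_def by simp
    have kle: "k \<le> Poly_Mapping.lookup \<alpha> q" using \<alpha>q k_def by linarith
    show ?thesis
    proof (rule smove[OF Asplit \<alpha>G \<beta>G, of p q k])
      show "sh \<alpha> p q k \<noteq> avec n d"
        by (rule neq_a[of _ p]) (use pq x2 d2' d2 k_def x_def in \<open>simp add: sh_lookup lookup_a\<close>)
      show "sh \<beta> q p k \<noteq> avec n d"
        by (rule neq_a[of _ p]) (use pq xy x2 k_def y_def in \<open>simp add: sh_lookup lookup_a\<close>)
      show "phi \<alpha> < phi (sh \<alpha> p q k)"
        by (rule sh_phi) (use pq kle k0 wqp in auto)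
    qed (use pq \<alpha>q xy k_def y_def in auto)
  qed
qed


lemma sh_a_j:
  assumes "sh y j i 1 = avec n d" "i \<noteq> j" "j \<noteq> p"
  shows "j = q"
proof (rule ccontr)
  assume "j \<noteq> q"
  have "Poly_Mapping.lookup (sh y j i 1) j = Poly_Mapping.lookup (avec n d) j" using assms(1) by simp
  then show False using assms(2,3) \<open>j \<noteq> q\<close> by (simp add: sh_lookup lookup_a)
qed

lemma step_nonexc:
  assumes A: "set_mset A \<subseteq> G0" and \<alpha>: "\<alpha> \<in># A" and mx: "\<forall>\<beta>\<in>#A. phi \<beta> \<le> phi \<alpha>"
    and ne: "\<not> exc (sum_mset A)" and ns: "\<not> sat (sum_mset A) \<alpha>"
  shows "good A \<alpha>"
proof -
  let ?s = "sum_mset A"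
  have \<alpha>G: "\<alpha> \<in> G0" using A \<alpha> by blast
  then have \<alpha>V: "\<alpha> \<in> Vnd n d" by simp
  obtain i j where ij: "i < n" "j < n" "rk i < rk j" "0 < Poly_Mapping.lookup \<alpha> j"
      "Poly_Mapping.lookup \<alpha> i \<noteq> Poly_Mapping.lookup ?s i"
    using ns unfolding sat_def by blast
  have ilt: "Poly_Mapping.lookup \<alpha> i < Poly_Mapping.lookup ?s i"
    using ij(5) in_A_le_s[OF \<alpha>, of i] by simp
  obtain \<beta> where \<beta>: "\<beta> \<in># A - {#\<alpha>#}" "0 < Poly_Mapping.lookup \<beta> i"
    using exists_pos[OF \<alpha> ilt] by blast
  have \<beta>A: "\<beta> \<in># A" using \<beta>(1) by (meson in_diffD)
  have \<beta>G: "\<beta> \<in> G0" using A \<beta>A by blast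
  then have \<beta>V: "\<beta> \<in> Vnd n d" by simp
  have Asplit: "A = (A - {#\<alpha>#} - {#\<beta>#}) + {#\<alpha>, \<beta>#}" by (rule split2[OF \<alpha> \<beta>(1)])
  have jp: "j \<noteq> p"
  proof
    assume "j = p"
    then have "rk j = 0" by (simp add: rk_def)
    with ij(3) show False by simp
  qed
  have iq: "i \<noteq> q" using ij(2,3) rk_le[of j] rk_q by auto
  have ijne: "i \<noteq> j" using ij(3) by auto
  have wij: "wt j < wt i" by (rule rk_lt_wt[OF ij(1-3)])
  have wqp: "wt q < wt p" using pq by (intro wt_p) auto
  have maxp: "\<And>\<beta>'. \<beta>' \<in># A \<Longrightarrow> 0 < Poly_Mapping.lookup \<beta>' p \<Longrightarrow> 0 < Poly_Mapping.lookup \<alpha> p"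
    using max_p[OF \<alpha>V mx] by blast
  have \<gamma>ne: "sh \<alpha> i j 1 \<noteq> avec n d"
  proof (cases "i = p")
    case True
    then have "0 < Poly_Mapping.lookup \<alpha> p" using maxp[OF \<beta>A] \<beta>(2) by simp
    then show ?thesis using True ijne by (intro neq_a[of _ p]) (simp add: sh_lookup lookup_a)
  next
    case False
    then show ?thesis using iq ijne by (intro neq_a[of _ i]) (simp add: sh_lookup lookup_a)
  qed
  have \<gamma>phi: "phi \<alpha> < phi (sh \<alpha> i j 1)" by (rule sh_phi) (use ij wij in auto)
  show ?thesis
  proof (cases "sh \<beta> j i 1 = avec n d")
    case False
    show ?thesis by (rule smove[OF Asplit \<alpha>G \<beta>G ij(1,2) _ _ \<gamma>ne False \<gamma>phi]) (use ij \<beta>(2) in auto)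
  next
    case True
    have jq: "j = q" by (rule sh_a_j[OF True ijne jp])
    have eqL: "\<And>l. Poly_Mapping.lookup (sh \<beta> j i 1) l = Poly_Mapping.lookup (avec n d) l" using True by simp
    have \<alpha>q1: "1 \<le> Poly_Mapping.lookup \<alpha> q" using ij(4) jq by simp
    show ?thesis
    proof (cases "i = p")
      case False
      have ih: "i < n - 2" using False iq ij(1) by linarith
      have \<beta>p: "Poly_Mapping.lookup \<beta> p = 1" using eqL[of p] jq False pq by (simp add: sh_lookup lookup_a)
      have \<alpha>p: "0 < Poly_Mapping.lookup \<alpha> p" using maxp[OF \<beta>A] \<beta>p by simp
      show ?thesis
      proof (rule smove[OF Asplit \<alpha>G \<beta>G, of p q 1])
        show "sh \<alpha> p q 1 \<noteq> avec n d"
          by (rule neq_a[of _ p]) (use pq \<alpha>p in \<open>simp add: sh_lookup lookup_a\<close>)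
        show "sh \<beta> q p 1 \<noteq> avec n d"
          by (rule neq_a[of _ i]) (use pq ih \<beta>(2) in \<open>simp add: sh_lookup lookup_a\<close>)
        show "phi \<alpha> < phi (sh \<alpha> p q 1)" by (rule sh_phi) (use pq \<alpha>q1 wqp in auto)
      qed (use pq \<alpha>q1 \<beta>p in auto)
    next
      case ip: True
      have \<beta>p: "Poly_Mapping.lookup \<beta> p = 2" using eqL[of p] jq ip pq \<beta>(2) by (simp add: sh_lookup lookup_a)
      have \<beta>H: "\<forall>h<n-2. Poly_Mapping.lookup \<beta> h = 0"
      proof (intro allI impI)
        fix h assume "h < n - 2"
        then show "Poly_Mapping.lookup \<beta> h = 0" using eqL[of h] jq ip pq by (simp add: sh_lookup lookup_a)
      qed
      have \<beta>eq: "\<beta> = Poly_Mapping.single p 2 + Poly_Mapping.single q (d - 2)"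
        using pqform(2)[OF \<beta>V \<beta>H] \<beta>p by simp
      have \<beta>q: "Poly_Mapping.lookup \<beta> q = d - 2" using pqform(1)[OF \<beta>V \<beta>H] \<beta>p by simp
      have \<alpha>p: "0 < Poly_Mapping.lookup \<alpha> p" using maxp[OF \<beta>A] \<beta>p by simp
      show ?thesis
      proof (cases "\<exists>h<n-2. 0 < Poly_Mapping.lookup \<alpha> h")
        case True
        then obtain h where h: "h < n - 2" "0 < Poly_Mapping.lookup \<alpha> h" by blast
        have whp: "wt h < wt p" using h(1) by (intro wt_p) auto
        show ?thesis
        proof (rule smove[OF Asplit \<alpha>G \<beta>G, of p h 1])
          show "sh \<alpha> p h 1 \<noteq> avec n d"
            by (rule neq_a[of _ p]) (use pq h(1) \<alpha>p in \<open>simp add: sh_lookup lookup_a\<close>)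
          show "sh \<beta> h p 1 \<noteq> avec n d"
            by (rule neq_a[of _ h]) (use pq h(1) in \<open>simp add: sh_lookup lookup_a\<close>)
          show "phi \<alpha> < phi (sh \<alpha> p h 1)" by (rule sh_phi) (use pq h whp in auto)
        qed (use pq h \<beta>p in auto)
      next
        case False
        then have \<alpha>H: "\<forall>h<n-2. Poly_Mapping.lookup \<alpha> h = 0" by auto
        define x where "x = Poly_Mapping.lookup \<alpha> p"
        have \<alpha>q: "Poly_Mapping.lookup \<alpha> q = d - x" using pqform(1)[OF \<alpha>V \<alpha>H] x_def by simp
        have x1: "x \<noteq> 1" using pq_is_a[OF \<alpha>V \<alpha>H] \<alpha>G x_def by auto
        have x0: "0 < x" using \<alpha>p x_def by simp
        have xd: "x < d" using \<alpha>q \<alpha>q1 by simp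
        show ?thesis
        proof (cases "x + 2 \<le> d")
          case True
          have k2: "2 \<le> Poly_Mapping.lookup \<alpha> q" using \<alpha>q True by simp
          show ?thesis
          proof (rule smove[OF Asplit \<alpha>G \<beta>G, of p q 2])
            show "sh \<alpha> p q 2 \<noteq> avec n d"
              by (rule neq_a[of _ p]) (use pq x_def in \<open>simp add: sh_lookup lookup_a\<close>)
            show "sh \<beta> q p 2 \<noteq> avec n d"
              by (rule neq_a[of _ p]) (use pq \<beta>p in \<open>simp add: sh_lookup lookup_a\<close>)
            show "phi \<alpha> < phi (sh \<alpha> p q 2)" by (rule sh_phi) (use pq k2 wqp in auto)
          qed (use pq k2 \<beta>p in auto)
        next
          case False
          have xd1: "x = d - 1" using False xd by linarith
          have d4: "4 \<le> d" using xd1 x0 x1 d3 by linarith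
          have \<alpha>q': "Poly_Mapping.lookup \<alpha> q = 1" using \<alpha>q xd1 d4 by simp
          have \<alpha>p': "Poly_Mapping.lookup \<alpha> p = d - 1" using xd1 x_def by simp
          let ?C = "A - {#\<alpha>#} - {#\<beta>#}"
          have \<gamma>dp: "sh \<alpha> p q 1 \<noteq> avec n d"
            by (rule neq_a[of _ p]) (use pq \<alpha>p' d4 in \<open>simp add: sh_lookup lookup_a\<close>)
          have \<gamma>phi': "phi \<alpha> < phi (sh \<alpha> p q 1)" by (rule sh_phi) (use pq \<alpha>q' wqp in auto)
          show ?thesis
          proof (cases "\<exists>\<beta>2\<in>#?C. 0 < Poly_Mapping.lookup \<beta>2 p")
            case True
            then obtain \<beta>2 where \<beta>2: "\<beta>2 \<in># ?C" "0 < Poly_Mapping.lookup \<beta>2 p" by blast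
            have \<beta>2a: "\<beta>2 \<in># A - {#\<alpha>#}" using \<beta>2(1) by (meson in_diffD)
            have \<beta>2A: "\<beta>2 \<in># A" using \<beta>2a by (meson in_diffD)
            have \<beta>2G: "\<beta>2 \<in> G0" using A \<beta>2A by blast
            then have \<beta>2V: "\<beta>2 \<in> Vnd n d" by simp
            show ?thesis
            proof (cases "\<beta>2 = \<beta>")
              case False
              have A2: "A = (A - {#\<alpha>#} - {#\<beta>2#}) + {#\<alpha>, \<beta>2#}" by (rule split2[OF \<alpha> \<beta>2a])
              have \<delta>ne: "sh \<beta>2 q p 1 \<noteq> avec n d"
              proof
                assume T2: "sh \<beta>2 q p 1 = avec n d"
                have eqL2: "\<And>l. Poly_Mapping.lookup (sh \<beta>2 q p 1) l = Poly_Mapping.lookup (avec n d) l" using T2 by simp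
                have b2p: "Poly_Mapping.lookup \<beta>2 p = 2" using eqL2[of p] pq \<beta>2(2) by (simp add: sh_lookup lookup_a)
                have b2H: "\<forall>h<n-2. Poly_Mapping.lookup \<beta>2 h = 0"
                proof (intro allI impI)
                  fix h assume "h < n - 2"
                  then show "Poly_Mapping.lookup \<beta>2 h = 0" using eqL2[of h] pq by (simp add: sh_lookup lookup_a)
                qed
                have "\<beta>2 = Poly_Mapping.single p 2 + Poly_Mapping.single q (d - 2)"
                  using pqform(2)[OF \<beta>2V b2H] b2p by simp
                then show False using \<beta>eq False by simp
              qed
              show ?thesis
                by (rule smove[OF A2 \<alpha>G \<beta>2G, of p q 1, OF _ _ _ _ \<gamma>dp \<delta>ne \<gamma>phi']) (use pq \<alpha>q' \<beta>2(2) in auto)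
            next
              case True
              have \<beta>C: "\<beta> \<in># ?C" using \<beta>2(1) True by simp
              define C' where "C' = ?C - {#\<beta>#}"
              have Ceq: "?C = C' + {#\<beta>#}" unfolding C'_def by (rule insert_DiffM2[OF \<beta>C, symmetric])
              have "A = (C' + {#\<beta>#}) + {#\<alpha>, \<beta>#}" by (subst Ceq[symmetric]) (rule Asplit)
              then have Aeq: "A = (C' + {#\<alpha>#}) + {#\<beta>, \<beta>#}" by (simp add: add_mset_commute)
              define c4 where "c4 = sh \<beta> p q 2"
              define z where "z = sh \<beta> q p 2"
              have c4G: "c4 \<in> G0" unfolding c4_def
                by (rule sh_G0[OF \<beta>V]) (use pq \<beta>q d4 in \<open>simp_all\<close>, rule neq_a[of _ p], use pq \<beta>p in \<open>simp add: sh_lookup lookup_a\<close>)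
              have zG: "z \<in> G0" unfolding z_def
                by (rule sh_G0[OF \<beta>V]) (use pq \<beta>p in \<open>simp_all\<close>, rule neq_a[of _ p], use pq \<beta>p in \<open>simp add: sh_lookup lookup_a\<close>)
              have c4p: "Poly_Mapping.lookup c4 p = 4" unfolding c4_def using pq \<beta>p by (simp add: sh_lookup)
              have st1: "mstep G0 A ((C' + {#\<alpha>#}) + {#c4, z#})"
                by (rule step_intro[OF Aeq \<beta>G \<beta>G c4G zG]) (unfold c4_def z_def, rule sh_pair, use \<beta>p \<beta>q d4 in simp_all)
              have A1: "(C' + {#\<alpha>#}) + {#c4, z#} = (C' + {#z#}) + {#\<alpha>, c4#}" by simp
              have g2: "good ((C' + {#z#}) + {#\<alpha>, c4#}) \<alpha>"
              proof (rule smove[OF refl \<alpha>G c4G, of p q 1, OF _ _ _ _ \<gamma>dp])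
                show "sh c4 q p 1 \<noteq> avec n d"
                  by (rule neq_a[of _ p]) (use pq c4p in \<open>simp add: sh_lookup lookup_a\<close>)
              qed (use pq \<alpha>q' c4p \<gamma>phi' in auto)
              have "conn A ((C' + {#\<alpha>#}) + {#c4, z#})" using st1 by blast
              then have "conn A ((C' + {#z#}) + {#\<alpha>, c4#})" unfolding A1 .
              then show ?thesis by (rule good_trans[OF _ g2])
            qed
          next
            case False
            then have C0: "\<forall>\<beta>2\<in>#?C. Poly_Mapping.lookup \<beta>2 p = 0" by auto
            have "Poly_Mapping.lookup (sum_mset ?C) p = 0"
              using C0 by (simp add: lookup_sum_mset)
            moreover have "Poly_Mapping.lookup ?s p = Poly_Mapping.lookup \<alpha> p + Poly_Mapping.lookup \<beta> p + Poly_Mapping.lookup (sum_mset ?C) p"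
              using sum_remove[OF \<alpha>, of p] sum_remove[OF \<beta>(1), of p] by simp
            ultimately have sp: "Poly_Mapping.lookup ?s p = d + 1" using \<alpha>p' \<beta>p d4 by simp
            then obtain h where h: "h < n - 2" "Poly_Mapping.lookup ?s h \<noteq> 0" using ne unfolding exc_def by blast
            have "Poly_Mapping.lookup \<alpha> h < Poly_Mapping.lookup ?s h" using h \<alpha>H by simp
            then obtain c where c: "c \<in># A - {#\<alpha>#}" "0 < Poly_Mapping.lookup c h"
              using exists_pos[OF \<alpha>] by blast
            have "c \<noteq> \<beta>" using c(2) \<beta>H h(1) by auto
            then have cC: "c \<in># ?C" using c(1) by (simp add: in_diff_count)
            have cp: "Poly_Mapping.lookup c p = 0" using C0 cC by blast
            have cA: "c \<in># A" using c(1) by (meson in_diffD)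
            have cG: "c \<in> G0" using A cA by blast
            have A3: "A = (A - {#\<alpha>#} - {#c#}) + {#\<alpha>, c#}" by (rule split2[OF \<alpha> c(1)])
            have whq: "wt q < wt h" using h(1) by (rule wt_hq)
            show ?thesis
            proof (rule smove[OF A3 \<alpha>G cG, of h q 1])
              show "sh \<alpha> h q 1 \<noteq> avec n d"
                by (rule neq_a[of _ h]) (use pq h(1) in \<open>simp add: sh_lookup lookup_a\<close>)
              show "sh c q h 1 \<noteq> avec n d"
                by (rule neq_a[of _ p]) (use pq h(1) cp in \<open>simp add: sh_lookup lookup_a\<close>)
              show "phi \<alpha> < phi (sh \<alpha> h q 1)" by (rule sh_phi) (use pq h(1) \<alpha>q' whq in auto)
            qed (use pq h \<alpha>q' c(2) in auto)
          qed
        qed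
      qed
    qed
  qed
qed

lemma step_lemma:
  assumes "set_mset A \<subseteq> G0" "\<alpha> \<in># A" "\<forall>\<beta>\<in>#A. phi \<beta> \<le> phi \<alpha>" "\<not> final (sum_mset A) \<alpha>"
  shows "good A \<alpha>"
proof (cases "exc (sum_mset A)")
  case True
  then show ?thesis using step_exc assms unfolding final_def by simp
next
  case False
  then show ?thesis using step_nonexc assms unfolding final_def by simp
qed


lemma mstep_sum: "mstep G0 A B \<Longrightarrow> sum_mset A = sum_mset B"
  unfolding mstep_def by (elim exE conjE) (simp add: add.assoc[symmetric])

lemma conn_sum: "conn A B \<Longrightarrow> sum_mset A = sum_mset B"
  by (induction rule: rtranclp_induct) (auto dest: mstep_sum)

lemma mstep_sym: "mstep G0 A B \<Longrightarrow> mstep G0 B A"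
  unfolding mstep_def by (elim exE conjE) (intro exI conjI, assumption+, simp)

lemma conn_sym: "conn A B \<Longrightarrow> conn B A"
proof (induction rule: rtranclp_induct)
  case base then show ?case by simp
next
  case (step B C)
  then show ?case using mstep_sym[OF step(2)] by (meson converse_rtranclp_into_rtranclp)
qed

lemma mstep_add: "mstep G0 A B \<Longrightarrow> mstep G0 (A + D) (B + D)"
proof -
  assume "mstep G0 A B"
  then obtain C x y \<gamma> \<delta> where st: "A = C + {#x,y#}" "B = C + {#\<gamma>,\<delta>#}" "x \<in> G0" "y \<in> G0" "\<gamma> \<in> G0" "\<delta> \<in> G0" "x + y = \<gamma> + \<delta>"
    unfolding mstep_def by (elim exE conjE) (rule that; assumption)
  have e1: "A + D = (C + D) + {#x,y#}" and e2: "B + D = (C + D) + {#\<gamma>,\<delta>#}" using st(1,2) by simp_all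
  show ?thesis unfolding e1 e2 by (rule step_intro[OF refl st(3-7)])
qed

lemma conn_add: "conn A B \<Longrightarrow> conn (A + D) (B + D)"
proof (induction rule: rtranclp_induct)
  case base then show ?case by simp
next
  case (step B C)
  show ?case using step(3) mstep_add[OF step(2), of D] by (rule rtranclp.rtrancl_into_rtrancl)
qed

lemma tot_0: "tot 0 = 0" by (simp add: tot_def)

lemma tot_sum: "set_mset A \<subseteq> Vnd n d \<Longrightarrow> tot (sum_mset A) = d * size A"
  by (induction A) (auto simp: tot_add V_tot tot_0)

lemma rk_inj: "rk l = rk c \<Longrightarrow> l = c"
  by (auto simp: rk_def split: if_splits)

lemma sat_aux:
  assumes \<alpha>V: "\<alpha> \<in> Vnd n d" and \<alpha>'V: "\<alpha>' \<in> Vnd n d"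
    and le': "\<forall>l. Poly_Mapping.lookup \<alpha>' l \<le> Poly_Mapping.lookup s l"
    and sa: "sat s \<alpha>" and sa': "sat s \<alpha>'" and c: "c < n"
    and lt: "Poly_Mapping.lookup \<alpha> c < Poly_Mapping.lookup \<alpha>' c"
    and eqb: "\<forall>l<n. rk l < rk c \<longrightarrow> Poly_Mapping.lookup \<alpha> l = Poly_Mapping.lookup \<alpha>' l"
  shows False
proof -
  have "\<exists>j<n. rk c < rk j \<and> 0 < Poly_Mapping.lookup \<alpha> j"
  proof (rule ccontr)
    assume "\<not> ?thesis"
    then have z: "\<And>j. j < n \<Longrightarrow> rk c < rk j \<Longrightarrow> Poly_Mapping.lookup \<alpha> j = 0" by auto
    have "tot \<alpha> < tot \<alpha>'" unfolding tot_def
    proof (rule sum_strict_mono_ex1)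
      show "\<forall>l\<in>{..<n}. Poly_Mapping.lookup \<alpha> l \<le> Poly_Mapping.lookup \<alpha>' l"
      proof
        fix l assume l: "l \<in> {..<n}"
        consider "rk l < rk c" | "rk l = rk c" | "rk c < rk l" by linarith
        then show "Poly_Mapping.lookup \<alpha> l \<le> Poly_Mapping.lookup \<alpha>' l"
        proof cases
          case 1 then show ?thesis using eqb l by simp
        next
          case 2 then have "l = c" by (rule rk_inj)
          then show ?thesis using lt by simp
        next
          case 3 then show ?thesis using z l by simp
        qed
      qed
      show "\<exists>l\<in>{..<n}. Poly_Mapping.lookup \<alpha> l < Poly_Mapping.lookup \<alpha>' l" using c lt by blast
    qed simp
    then show False using V_tot[OF \<alpha>V] V_tot[OF \<alpha>'V] by simp
  qed
  then obtain j where j: "j < n" "rk c < rk j" "0 < Poly_Mapping.lookup \<alpha> j" by blast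
  have "Poly_Mapping.lookup \<alpha> c = Poly_Mapping.lookup s c" using sa c j unfolding sat_def by blast
  moreover have "Poly_Mapping.lookup \<alpha>' c \<le> Poly_Mapping.lookup s c" using le' by blast
  ultimately show False using lt by simp
qed

lemma final_unique:
  assumes \<alpha>V: "\<alpha> \<in> Vnd n d" and \<alpha>'V: "\<alpha>' \<in> Vnd n d"
    and le: "\<forall>l. Poly_Mapping.lookup \<alpha> l \<le> Poly_Mapping.lookup s l"
    and le': "\<forall>l. Poly_Mapping.lookup \<alpha>' l \<le> Poly_Mapping.lookup s l"
    and f: "final s \<alpha>" and f': "final s \<alpha>'"
  shows "\<alpha> = \<alpha>'"
proof (cases "exc s")
  case True
  then show ?thesis using f f' unfolding final_def by simp
next
  case False
  then have sa: "sat s \<alpha>" and sa': "sat s \<alpha>'" using f f' unfolding final_def by simp_all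
  show ?thesis
  proof (rule ccontr)
    assume ne: "\<alpha> \<noteq> \<alpha>'"
    have "\<exists>l. l < n \<and> Poly_Mapping.lookup \<alpha> l \<noteq> Poly_Mapping.lookup \<alpha>' l"
    proof (rule ccontr)
      assume nex: "\<not> ?thesis"
      have "\<And>l. Poly_Mapping.lookup \<alpha> l = Poly_Mapping.lookup \<alpha>' l"
      proof -
        fix l show "Poly_Mapping.lookup \<alpha> l = Poly_Mapping.lookup \<alpha>' l"
        proof (cases "l < n")
          case True then show ?thesis using nex by blast
        next
          case False then show ?thesis using V_zero[OF \<alpha>V, of l] V_zero[OF \<alpha>'V, of l] by simp
        qed
      qed
      then have "\<alpha> = \<alpha>'" by (rule poly_mapping_eqI)
      then show False using ne by simp
    qed
    then obtain l0 where "l0 < n \<and> Poly_Mapping.lookup \<alpha> l0 \<noteq> Poly_Mapping.lookup \<alpha>' l0" by blast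
    then obtain c where c: "c < n \<and> Poly_Mapping.lookup \<alpha> c \<noteq> Poly_Mapping.lookup \<alpha>' c"
      and cmin: "\<forall>y. y < n \<and> Poly_Mapping.lookup \<alpha> y \<noteq> Poly_Mapping.lookup \<alpha>' y \<longrightarrow> rk c \<le> rk y"
      using ex_has_least_nat[of "\<lambda>l. l < n \<and> Poly_Mapping.lookup \<alpha> l \<noteq> Poly_Mapping.lookup \<alpha>' l" l0 rk] by blast
    have eqb: "\<forall>l<n. rk l < rk c \<longrightarrow> Poly_Mapping.lookup \<alpha> l = Poly_Mapping.lookup \<alpha>' l"
      using cmin by (meson not_le)
    have eqb': "\<forall>l<n. rk l < rk c \<longrightarrow> Poly_Mapping.lookup \<alpha>' l = Poly_Mapping.lookup \<alpha> l"
      using eqb by simp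
    show False
    proof (cases "Poly_Mapping.lookup \<alpha> c < Poly_Mapping.lookup \<alpha>' c")
      case True
      show False by (rule sat_aux[OF \<alpha>V \<alpha>'V le' sa sa' _ True eqb]) (use c in simp)
    next
      case False
      then have "Poly_Mapping.lookup \<alpha>' c < Poly_Mapping.lookup \<alpha> c" using c by simp
      show False by (rule sat_aux[OF \<alpha>'V \<alpha>V le sa' sa _ \<open>_ < _\<close> eqb']) (use c in simp)
    qed
  qed
qed

definition bnd :: nat where "bnd = (n * d + 1) * d"

lemma reach:
  "set_mset A \<subseteq> G0 \<Longrightarrow> A \<noteq> {#} \<Longrightarrow> \<exists>A1 \<alpha>1. conn A A1 \<and> \<alpha>1 \<in># A1 \<and> final (sum_mset A) \<alpha>1"
proof (induction "bnd - Max (phi ` set_mset A)" arbitrary: A rule: less_induct)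
  case less
  have fin: "finite (phi ` set_mset A)" by simp
  have nem: "phi ` set_mset A \<noteq> {}" using less.prems(2) by simp
  obtain \<alpha> where \<alpha>: "\<alpha> \<in># A" "phi \<alpha> = Max (phi ` set_mset A)"
    using Max_in[OF fin nem] by auto
  have mx: "\<forall>\<beta>\<in>#A. phi \<beta> \<le> phi \<alpha>" using \<alpha>(2) fin by simp
  show ?case
  proof (cases "final (sum_mset A) \<alpha>")
    case True
    then show ?thesis using \<alpha>(1) by blast
  next
    case False
    have "good A \<alpha>" by (rule step_lemma[OF less.prems(1) \<alpha>(1) mx False])
    then obtain A' \<gamma> where A': "conn A A'" "\<gamma> \<in># A'" "phi \<alpha> < phi \<gamma>" unfolding good_def by blast
    have A'G: "set_mset A' \<subseteq> G0" using conn_Gamma[OF A'(1) less.prems(1)] .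
    have A'ne: "A' \<noteq> {#}" using A'(2) by auto
    have sA': "sum_mset A' = sum_mset A" using conn_sum[OF A'(1)] by simp
    have fin': "finite (phi ` set_mset A')" by simp
    have "phi \<gamma> \<le> Max (phi ` set_mset A')" using A'(2) fin' by simp
    moreover have "Max (phi ` set_mset A') \<le> bnd"
    proof -
      have "Max (phi ` set_mset A') \<in> phi ` set_mset A'" using Max_in[OF fin'] A'ne by simp
      then obtain \<delta> where "\<delta> \<in># A'" "Max (phi ` set_mset A') = phi \<delta>" by auto
      then show ?thesis using phi_bound[of \<delta>] A'G unfolding bnd_def by auto
    qed
    ultimately have "bnd - Max (phi ` set_mset A') < bnd - Max (phi ` set_mset A)"
      using A'(3) \<alpha>(2) by linarith
    from less.hyps[OF this A'G A'ne] obtain A1 \<alpha>1 where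
      "conn A' A1" "\<alpha>1 \<in># A1" "final (sum_mset A') \<alpha>1" by blast
    then show ?thesis using A'(1) sA' by (metis rtranclp_trans)
  qed
qed

lemma conn_main:
  "set_mset A \<subseteq> G0 \<Longrightarrow> set_mset B \<subseteq> G0 \<Longrightarrow> sum_mset A = sum_mset B \<Longrightarrow> conn A B"
proof (induction "size A" arbitrary: A B rule: less_induct)
  case less
  have AV: "set_mset A \<subseteq> Vnd n d" and BV: "set_mset B \<subseteq> Vnd n d" using less.prems by auto
  have sz: "size A = size B"
    using tot_sum[OF AV] tot_sum[OF BV] less.prems(3) d2 by simp
  show ?case
  proof (cases "A = {#}")
    case True
    then have "B = {#}" using sz by simp
    then show ?thesis using True by simp
  next
    case False
    then have Bne: "B \<noteq> {#}" using sz by auto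
    obtain A1 \<alpha>1 where a1: "conn A A1" "\<alpha>1 \<in># A1" "final (sum_mset A) \<alpha>1"
      using reach[OF less.prems(1) False] by blast
    obtain B1 \<beta>1 where b1: "conn B B1" "\<beta>1 \<in># B1" "final (sum_mset B) \<beta>1"
      using reach[OF less.prems(2) Bne] by blast
    let ?s = "sum_mset A"
    have sA1: "sum_mset A1 = ?s" using conn_sum[OF a1(1)] by simp
    have sB1: "sum_mset B1 = ?s" using conn_sum[OF b1(1)] less.prems(3) by simp
    have A1G: "set_mset A1 \<subseteq> G0" using conn_Gamma[OF a1(1) less.prems(1)] .
    have B1G: "set_mset B1 \<subseteq> G0" using conn_Gamma[OF b1(1) less.prems(2)] .
    have eq: "\<alpha>1 = \<beta>1"
    proof (rule final_unique)
      show "\<alpha>1 \<in> Vnd n d" using A1G a1(2) by blast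
      show "\<beta>1 \<in> Vnd n d" using B1G b1(2) by blast
      show "\<forall>l. Poly_Mapping.lookup \<alpha>1 l \<le> Poly_Mapping.lookup ?s l" using elem_le_sum[OF a1(2)] sA1 by simp
      show "\<forall>l. Poly_Mapping.lookup \<beta>1 l \<le> Poly_Mapping.lookup ?s l" using elem_le_sum[OF b1(2)] sB1 by simp
      show "final ?s \<alpha>1" using a1(3) .
      show "final ?s \<beta>1" using b1(3) less.prems(3) by simp
    qed
    define A1' where "A1' = A1 - {#\<alpha>1#}"
    define B1' where "B1' = B1 - {#\<alpha>1#}"
    have A1eq: "A1 = A1' + {#\<alpha>1#}" unfolding A1'_def by (rule insert_DiffM2[OF a1(2), symmetric])
    have B1eq: "B1 = B1' + {#\<alpha>1#}" unfolding B1'_def eq by (rule insert_DiffM2[OF b1(2), symmetric])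
    have sums: "sum_mset A1' = sum_mset B1'"
    proof -
      have "\<alpha>1 + sum_mset A1' = ?s" using arg_cong[OF A1eq, of sum_mset] sA1 by simp
      moreover have "\<alpha>1 + sum_mset B1' = ?s" using arg_cong[OF B1eq, of sum_mset] sB1 by simp
      ultimately have "\<alpha>1 + sum_mset A1' = \<alpha>1 + sum_mset B1'" by simp
      then show ?thesis by simp
    qed
    have A1V: "set_mset A1 \<subseteq> Vnd n d" using A1G by auto
    have "size A1 = size A" using tot_sum[OF A1V] tot_sum[OF AV] sA1 d2 by simp
    then have szl: "size A1' < size A" using A1eq by simp
    have "conn A1' B1'"
      by (rule less.hyps[OF szl]) (use A1G B1G A1eq B1eq sums in auto)
    then have "conn A1 B1" using conn_add[of A1' B1' "{#\<alpha>1#}"] A1eq B1eq by simp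
    then have "conn A B1" using a1(1) by (meson rtranclp_trans)
    then show ?thesis using conn_sym[OF b1(1)] by (meson rtranclp_trans)
  qed
qed

end

theorem theorem2p3:
  fixes n d :: nat
  assumes "n \<ge> 2" and "d \<ge> 2" and "d \<noteq> 3"
  defines "\<Gamma> \<equiv> Vnd n d - {avec n d}"
  shows "\<exists>G :: 'k::field spoly set. (\<forall>g\<in>G. homogeneous_deg 2 g) \<and>
           G \<subseteq> toric_ideal \<Gamma> \<and> toric_ideal \<Gamma> = ideal_in (Sring \<Gamma>) G"
proof -
  interpret comb n d using assms(1-3) by unfold_locales auto
  have "\<And>A B. set_mset A \<subseteq> \<Gamma> \<Longrightarrow> set_mset B \<subseteq> \<Gamma> \<Longrightarrow> sum_mset A = sum_mset B \<Longrightarrow> (mstep \<Gamma>)\<^sup>*\<^sup>* A B"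
    unfolding \<Gamma>_def by (rule conn_main)
  then show ?thesis by (rule reduction)
qed

end
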